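(* Let $f$ be convex and differentiable with $L$-Lipschitz gradient, $h$ proper closed convex, $F=f+h$, $\mathbf{x}^*$ a minimizer of $F$, $\alpha>0$ with $\alpha L\le1$, and $\varepsilon\ge0$. Let $\mathbf{x}^{(k-1)},\mathbf{v}^{(k)},\mathbf{e}^{(k)}\in\mathbb{R}^d$ with $\|\mathbf{v}^{(k)}-\nabla f(\mathbf{x}^{(k-1)})\|\le M$, let $\mathbf{q}^{(k)}=\mathbf{x}^{(k-1)}-\alpha(\mathbf{v}^{(k)}+\mathbf{e}^{(k)})$, and let $\mathbf{x}^{(k)}$ be an $\varepsilon$-inexact proximal point of $\mathbf{q}^{(k)}$. Let $\mathbf{g}$ satisfy $\frac1\alpha(\mathbf{q}^{(k)}+\mathbf{g}-\mathbf{x}^{(k)})\in\partial_\varepsilon h(\mathbf{x}^{(k)})$ and $\|\mathbf{g}\|\le\sqrt{2\alpha\varepsilon}$, let $\boldsymbol{\xi}^{(k-1)}=\frac1\alpha(\mathbf{x}^{(k-1)}-\mathbf{x}^{(k)})$, and let $\underline{\mathbf{x}}$ be an $\varepsilon$-inexact proximal point of $\mathbf{x}^{(k-1)}-\alpha\nabla f(\mathbf{x}^{(k-1)})$. Then $$-\alpha^2\|\boldsymbol{\xi}^{(k-1)}\|^2-2\alpha\langle\boldsymbol{\xi}^{(k-1)},\mathbf{x}^{(k)}-\mathbf{x}^*\rangle\le-2\alpha\big(F(\mathbf{x}^{(k)})-F(\mathbf{x}^* )\big)+2\alpha\varepsilon+2\alpha^2\|\mathbf{v}^{(k)}-\nabla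 f(\mathbf{x}^{(k-1)})\|^2+\big(2\alpha^2\|\mathbf{e}^{(k)}\|+6\alpha\sqrt{2\alpha\varepsilon}\big)M-2\alpha\langle\mathbf{x}^{(k)}-\mathbf{x}^*,\mathbf{e}^{(k)}-\tfrac1\alpha\mathbf{g}\rangle-2\alpha\langle\underline{\mathbf{x}}-\mathbf{x}^*,\mathbf{v}^{(k)}-\nabla f(\mathbf{x}^{(k-1)})\rangle.$$
   Context: A point $\mathbf{x}$ is an $\varepsilon$-inexact proximal point of $\mathbf{z}$ (with parameter $\alpha$) if $\frac1{2\alpha}\|\mathbf{x}-\mathbf{z}\|^2+h(\mathbf{x})\le\min_{\mathbf{y}}\{\frac1{2\alpha}\|\mathbf{y}-\mathbf{z}\|^2+h(\mathbf{y})\}+\varepsilon$. The $\varepsilon$-subdifferential is $\partial_\varepsilon h(\mathbf{x})=\{\mathbf{p}: h(\mathbf{y})\ge h(\mathbf{x})+\langle\mathbf{p},\mathbf{y}-\mathbf{x}\rangle-\varepsilon\ \forall\mathbf{y}\}$. *)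

theory Defs
  imports "HOL-Analysis.Analysis" "HOL-Library.Extended_Real"
begin

definition proper_fun :: "('a \<Rightarrow> ereal) \<Rightarrow> bool" where
  "proper_fun h \<longleftrightarrow> (\<forall>x. h x \<noteq> -\<infinity>) \<and> (\<exists>x. h x \<noteq> \<infinity>)"

definition epigraph_e :: "('a \<Rightarrow> ereal) \<Rightarrow> ('a \<times> real) set" where
  "epigraph_e h = {(x, t). h x \<le> ereal t}"

definition closed_fun :: "('a::topological_space \<Rightarrow> ereal) \<Rightarrow> bool" where
  "closed_fun h \<longleftrightarrow> closed (epigraph_e h)"

definition convex_fun :: "('a::real_vector \<Rightarrow> ereal) \<Rightarrow> bool" where
  "convex_fun h \<longleftrightarrow> convex (epigraph_e h)"

definition inexact_prox ::
  "('a::real_normed_vector \<Rightarrow> ereal) \<Rightarrow> real \<Rightarrow> real \<Rightarrow> 'a \<Rightarrow> 'a \<Rightarrow> bool" where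
  "inexact_prox h \<alpha> \<epsilon> z x \<longleftrightarrow>
     ereal (1 / (2 * \<alpha>) * (norm (x - z))\<^sup>2) + h x
       \<le> (INF y. ereal (1 / (2 * \<alpha>) * (norm (y - z))\<^sup>2) + h y) + ereal \<epsilon>"

definition eps_subdiff :: "('a::real_inner \<Rightarrow> ereal) \<Rightarrow> real \<Rightarrow> 'a \<Rightarrow> 'a set" where
  "eps_subdiff h \<epsilon> x = {p. \<forall>y. h y \<ge> h x + ereal (inner p (y - x) - \<epsilon>)}"

end

theory Submission
  imports Defs
begin

lemma line_deriv:
  fixes f :: "'a::real_inner \<Rightarrow> real"
  assumes "\<And>x. (f has_derivative (\<lambda>u. inner (gf x) u)) (at x)"
  shows "((\<lambda>t. f (x + t *\<^sub>R d)) has_real_derivative inner (gf (x + t *\<^sub>R d)) d) (at t)"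
proof -
  have 1: "((\<lambda>t. x + t *\<^sub>R d) has_derivative (\<lambda>s. s *\<^sub>R d)) (at t)"
    by (auto intro!: derivative_eq_intros)
  have "((f \<circ> (\<lambda>t. x + t *\<^sub>R d)) has_derivative ((\<lambda>u. inner (gf (x + t *\<^sub>R d)) u) \<circ> (\<lambda>s. s *\<^sub>R d))) (at t)"
    by (rule diff_chain_at[OF 1 assms])
  moreover have "(\<lambda>s. s * inner (gf (x + t *\<^sub>R d)) d) = (*) (inner (gf (x + t *\<^sub>R d)) d)"
    by (auto simp: mult.commute)
  ultimately show ?thesis
    unfolding has_field_derivative_def o_def
    by (simp add: inner_scaleR_right)
qed

lemma descent:
  fixes f :: "'a::real_inner \<Rightarrow> real"
  assumes fd: "\<And>x. (f has_derivative (\<lambda>u. inner (gf x) u)) (at x)"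
    and lip: "L-lipschitz_on UNIV gf"
  shows "f y \<le> f x + inner (gf x) (y - x) + L / 2 * (norm (y - x))\<^sup>2"
proof -
  define d where "d = y - x"
  define \<psi> where "\<psi> t = f (x + t *\<^sub>R d) - t * inner (gf x) d - L / 2 * t\<^sup>2 * (norm d)\<^sup>2" for t
  have L0: "L \<ge> 0" using lip by (simp add: lipschitz_on_def)
  have "\<psi> 0 \<ge> \<psi> 1"
  proof (rule DERIV_nonpos_imp_nonincreasing[of 0 1 \<psi>])
    fix t :: real assume t: "0 \<le> t" "t \<le> 1"
    have der: "(\<psi> has_real_derivative inner (gf (x + t *\<^sub>R d)) d - inner (gf x) d - L * t * (norm d)\<^sup>2) (at t)"
      unfolding \<psi>_def
      by (auto intro!: derivative_eq_intros line_deriv[OF fd])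
    have "inner (gf (x + t *\<^sub>R d)) d - inner (gf x) d = inner (gf (x + t *\<^sub>R d) - gf x) d"
      by (simp add: inner_diff_left)
    also have "\<dots> \<le> norm (gf (x + t *\<^sub>R d) - gf x) * norm d" by (rule norm_cauchy_schwarz)
    also have "\<dots> \<le> L * dist (x + t *\<^sub>R d) x * norm d"
    proof -
      have "norm (gf (x + t *\<^sub>R d) - gf x) \<le> L * dist (x + t *\<^sub>R d) x"
      using lipschitz_onD[OF lip, of "x + t *\<^sub>R d" x] by (simp add: dist_norm)
      thus ?thesis by (simp add: mult_right_mono)
    qed
    also have "L * dist (x + t *\<^sub>R d) x * norm d = L * t * (norm d)\<^sup>2"
      using t by (simp add: dist_norm power2_eq_square)
    finally show "\<exists>y. DERIV \<psi> t :> y \<and> y \<le> 0" using der by auto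
  qed simp
  then show ?thesis by (simp add: \<psi>_def d_def)
qed

lemma grad_ineq:
  fixes f :: "'a::real_inner \<Rightarrow> real"
  assumes cv: "convex_on UNIV f"
    and fd: "\<And>x. (f has_derivative (\<lambda>u. inner (gf x) u)) (at x)"
  shows "f y \<ge> f x + inner (gf x) (y - x)"
proof -
  define d where "d = y - x"
  define \<phi> where "\<phi> t = f (x + t *\<^sub>R d)" for t
  have "convex_on UNIV \<phi>"
  proof (rule convex_onI)
    fix t a b :: real assume "t > 0" "t < 1"
    have "\<phi> ((1 - t) *\<^sub>R a + t *\<^sub>R b) = f ((1 - t) *\<^sub>R (x + a *\<^sub>R d) + t *\<^sub>R (x + b *\<^sub>R d))"
      unfolding \<phi>_def by (simp add: algebra_simps)
    also have "\<dots> \<le> (1 - t) * \<phi> a + t * \<phi> b"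
      unfolding \<phi>_def using \<open>t > 0\<close> \<open>t < 1\<close> by (intro convex_onD[OF cv]) auto
    finally show "\<phi> ((1 - t) *\<^sub>R a + t *\<^sub>R b) \<le> (1 - t) * \<phi> a + t * \<phi> b" .
  qed simp
  moreover have "(\<phi> has_real_derivative inner (gf x) d) (at 0 within UNIV)"
    unfolding \<phi>_def using line_deriv[OF fd, of x d 0] by simp
  ultimately have "\<phi> 1 - \<phi> 0 \<ge> inner (gf x) d * (1 - 0)"
    by (intro convex_on_imp_above_tangent) auto
  then show ?thesis by (simp add: \<phi>_def d_def)
qed

lemma h_conv:
  assumes hc: "convex_fun h" and ha: "h a = ereal ha" and hb: "h b = ereal hb"
    and t: "0 \<le> t" "t \<le> 1" and nm: "\<And>x. h x \<noteq> -\<infinity>"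
  shows "\<exists>hy. h ((1 - t) *\<^sub>R a + t *\<^sub>R b) = ereal hy \<and> hy \<le> (1 - t) * ha + t * hb"
proof -
  have "(a, ha) \<in> epigraph_e h" "(b, hb) \<in> epigraph_e h" using ha hb by (auto simp: epigraph_e_def)
  hence "(1 - t) *\<^sub>R (a, ha) + t *\<^sub>R (b, hb) \<in> epigraph_e h"
    using hc t unfolding convex_fun_def by (intro convexD) auto
  hence le: "h ((1 - t) *\<^sub>R a + t *\<^sub>R b) \<le> ereal ((1 - t) * ha + t * hb)"
    by (simp add: epigraph_e_def)
  show ?thesis
  proof (cases "h ((1 - t) *\<^sub>R a + t *\<^sub>R b)")
    case (real r) then show ?thesis using le by auto
  next
    case PInf then show ?thesis using le by auto
  next
    case MInf then show ?thesis using nm by auto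
  qed
qed

lemma scalar_bound:
  fixes D a r :: real
  assumes D: "D \<ge> 0" and a: "a \<ge> 0" and r: "r \<ge> 0"
    and H: "\<And>s. 0 < s \<Longrightarrow> s \<le> 1 \<Longrightarrow> 2 * D\<^sup>2 - 2 * a * D \<le> s * D\<^sup>2 + r\<^sup>2 * (1 + 1 / s)"
  shows "D \<le> a + 2 * r"
proof (cases "D \<le> a")
  case True then show ?thesis using r by linarith
next
  case False
  define s where "s = (D - a) / D"
  have Dp: "D > 0" using False a by linarith
  have s0: "0 < s" unfolding s_def using False Dp by simp
  have s1: "s \<le> 1" unfolding s_def using Dp a by (simp add: divide_le_eq)
  have sD: "s * D = D - a" using Dp by (simp add: s_def)
  have inv: "s * (1 / s) = 1" using s0 by simp
  have "s * (2 * D\<^sup>2 - 2 * a * D) \<le> s * (s * D\<^sup>2 + r\<^sup>2 * (1 + 1 / s))"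
    using H[OF s0 s1] s0 by (intro mult_left_mono) auto
  also have "s * (s * D\<^sup>2 + r\<^sup>2 * (1 + 1 / s)) = (s * D)\<^sup>2 + r\<^sup>2 * s + r\<^sup>2 * (s * (1 / s))"
    by (simp only: power2_eq_square distrib_left mult_1_right mult.assoc mult.left_commute add.assoc) (simp only: mult.commute)
  also have "s * (2 * D\<^sup>2 - 2 * a * D) = 2 * (s * D) * (D - a)"
    by (simp add: power2_eq_square algebra_simps)
  finally have "2 * (D - a) * (D - a) \<le> (D - a)\<^sup>2 + r\<^sup>2 * s + r\<^sup>2"
    by (simp only: sD inv mult_1_right)
  moreover have "2 * (D - a) * (D - a) = (D - a)\<^sup>2 + (D - a)\<^sup>2" by (simp add: power2_eq_square)
  ultimately have "(D - a)\<^sup>2 \<le> r\<^sup>2 * s + r\<^sup>2" by linarith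
  also have "\<dots> \<le> r\<^sup>2 * 1 + r\<^sup>2" using mult_left_mono[OF s1, of "r\<^sup>2"] by simp
  also have "\<dots> \<le> (2 * r)\<^sup>2"
  proof -
    have "(2 * r)\<^sup>2 = 4 * r\<^sup>2" by (simp add: power_mult_distrib)
    moreover have "r\<^sup>2 \<ge> 0" by simp
    ultimately show ?thesis by linarith
  qed
  finally have "D - a \<le> 2 * r" using r by (metis power2_le_imp_le mult_nonneg_nonneg zero_le_numeral)
  then show ?thesis by linarith
qed

lemma final_alg:
  fixes a A I1 I2 I3 X E N2 ne r M :: real
  assumes H: "A \<le> I1 - I2 - I3 + a / 2 * X + E + a * N2 + (a * ne + 3 * r) * M" and a: "a > 0"
  shows "- a\<^sup>2 * X - 2 * a * I1 \<le> (- 2 * a) * A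
     + (2 * a * E + 2 * a\<^sup>2 * N2 + (2 * a\<^sup>2 * ne + 6 * a * r) * M - 2 * a * I2 - 2 * a * I3)"
proof -
  have "2 * a * A \<le> 2 * a * (I1 - I2 - I3 + a / 2 * X + E + a * N2 + (a * ne + 3 * r) * M)"
    using H a by (intro mult_left_mono) auto
  also have "\<dots> = 2 * a * I1 - 2 * a * I2 - 2 * a * I3 + a\<^sup>2 * X + 2 * a * E + 2 * a\<^sup>2 * N2
      + (2 * a\<^sup>2 * ne + 6 * a * r) * M"
    by (simp add: algebra_simps power2_eq_square)
  finally show ?thesis by (simp add: algebra_simps)
qed

theorem proposition1:
  fixes f :: "'a::euclidean_space \<Rightarrow> real" and gf :: "'a \<Rightarrow> 'a"
    and h :: "'a \<Rightarrow> ereal" and F :: "'a \<Rightarrow> ereal"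
    and L \<alpha> \<epsilon> M :: real
    and xs xprev v e q xk g \<xi> xu :: 'a
  assumes f_convex: "convex_on UNIV f"
    and f_grad: "\<And>x. (f has_derivative (\<lambda>u. inner (gf x) u)) (at x)"
    and gf_lip: "L-lipschitz_on UNIV gf"
    and h_proper: "proper_fun h" and h_closed: "closed_fun h" and h_convex: "convex_fun h"
    and F_def: "\<And>x. F x = ereal (f x) + h x"
    and xs_min: "\<And>y. F xs \<le> F y"
    and alpha_pos: "\<alpha> > 0" and alpha_L: "\<alpha> * L \<le> 1"
    and eps_nonneg: "\<epsilon> \<ge> 0"
    and v_bound: "norm (v - gf xprev) \<le> M"
    and q_def: "q = xprev - \<alpha> *\<^sub>R (v + e)"
    and xk_prox: "inexact_prox h \<alpha> \<epsilon> q xk"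
    and g_sub: "(1 / \<alpha>) *\<^sub>R (q + g - xk) \<in> eps_subdiff h \<epsilon> xk"
    and g_bound: "norm g \<le> sqrt (2 * \<alpha> * \<epsilon>)"
    and xi_def: "\<xi> = (1 / \<alpha>) *\<^sub>R (xprev - xk)"
    and xu_prox: "inexact_prox h \<alpha> \<epsilon> (xprev - \<alpha> *\<^sub>R gf xprev) xu"
  shows "ereal (- \<alpha>\<^sup>2 * (norm \<xi>)\<^sup>2 - 2 * \<alpha> * inner \<xi> (xk - xs))
    \<le> ereal (- 2 * \<alpha>) * (F xk - F xs)
       + ereal (2 * \<alpha> * \<epsilon> + 2 * \<alpha>\<^sup>2 * (norm (v - gf xprev))\<^sup>2
          + (2 * \<alpha>\<^sup>2 * norm e + 6 * \<alpha> * sqrt (2 * \<alpha> * \<epsilon>)) * M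
          - 2 * \<alpha> * inner (xk - xs) (e - (1 / \<alpha>) *\<^sub>R g)
          - 2 * \<alpha> * inner (xu - xs) (v - gf xprev))"
  proof -
  define x where "x = xprev"
  define gx where "gx = gf xprev"
  define z1 where "z1 = xprev - \<alpha> *\<^sub>R gf xprev"
  define p where "p = (1 / \<alpha>) *\<^sub>R (q + g - xk)"
  define r where "r = sqrt (2 * \<alpha> * \<epsilon>)"
  define N where "N = norm (v - gf xprev)"
  have r0: "r \<ge> 0" and r2: "r\<^sup>2 = 2 * \<alpha> * \<epsilon>" using alpha_pos eps_nonneg by (auto simp: r_def)
  have nm: "\<And>x. h x \<noteq> -\<infinity>" using h_proper by (auto simp: proper_fun_def)
  obtain x0 where hx0: "h x0 \<noteq> \<infinity>" using h_proper by (auto simp: proper_fun_def)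
  have sub: "\<And>y. h y \<ge> h xk + ereal (inner p (y - xk) - \<epsilon>)"
    using g_sub unfolding eps_subdiff_def p_def by auto
  have "h xk \<noteq> \<infinity>"
  proof
    assume "h xk = \<infinity>"
    then have "h x0 = \<infinity>" using sub[of x0] by simp
    then show False using hx0 by simp
  qed
  then obtain hk where hk: "h xk = ereal hk" using nm[of xk] by (cases "h xk") auto
  have "h xs \<noteq> \<infinity>"
  proof
    assume "h xs = \<infinity>"
    then have "F xs = \<infinity>" using F_def by simp
    moreover have "F xs \<le> ereal (f xk + hk)" using xs_min[of xk] F_def[of xk] hk by simp
    ultimately show False by simp
  qed
  then obtain hs where hs: "h xs = ereal hs" using nm[of xs] by (cases "h xs") auto
  have proxu: "ereal (1 / (2 * \<alpha>) * (norm (xu - z1))\<^sup>2) + h xu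
      \<le> ereal (1 / (2 * \<alpha>) * (norm (y - z1))\<^sup>2) + h y + ereal \<epsilon>" for y
  proof -
    have "ereal (1 / (2 * \<alpha>) * (norm (xu - z1))\<^sup>2) + h xu
       \<le> (INF y. ereal (1 / (2 * \<alpha>) * (norm (y - z1))\<^sup>2) + h y) + ereal \<epsilon>"
      using xu_prox unfolding inexact_prox_def z1_def .
    also have "\<dots> \<le> ereal (1 / (2 * \<alpha>) * (norm (y - z1))\<^sup>2) + h y + ereal \<epsilon>"
      by (rule add_right_mono, rule INF_lower) simp
    finally show ?thesis .
  qed
  have "h xu \<noteq> \<infinity>"
  proof
    assume "h xu = \<infinity>"
    then show False using proxu[of x0] hx0 nm[of x0] by (cases "h x0") auto
  qed
  then obtain hu where hu: "h xu = ereal hu" using nm[of xu] by (cases "h xu") auto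
  define d where "d = xu - xk"
  define D where "D = norm d"
  define c where "c = \<alpha> * N + \<alpha> * norm e"
  have qz: "q - z1 = - \<alpha> *\<^sub>R ((v - gf xprev) + e)" by (simp add: q_def z1_def algebra_simps)
  have nqz: "norm (q - z1 + g) \<le> c + r"
  proof -
    have "norm (q - z1 + g) \<le> norm (q - z1) + norm g" by (rule norm_triangle_ineq)
    also have "norm (q - z1) \<le> c" unfolding qz c_def N_def using alpha_pos
      by (simp add: distrib_left[symmetric] norm_triangle_ineq)
    finally show ?thesis using g_bound r_def by linarith
  qed
  have Dbnd: "D \<le> (c + r) + 2 * r"
  proof (rule scalar_bound)
    show "D \<ge> 0" "c + r \<ge> 0" "r \<ge> 0" using r0 alpha_pos by (auto simp: D_def c_def N_def)
    fix s :: real assume s: "0 < s" "s \<le> 1"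
    define y where "y = (1 - s) *\<^sub>R xu + s *\<^sub>R xk"
    obtain hy where hy: "h y = ereal hy" and hyle: "hy \<le> (1 - s) * hu + s * hk"
      using h_conv[OF h_convex hu hk, of s] s nm unfolding y_def by auto
    have P: "1 / (2 * \<alpha>) * (norm (xu - z1))\<^sup>2 + hu \<le> 1 / (2 * \<alpha>) * (norm (y - z1))\<^sup>2 + hy + \<epsilon>"
      using proxu[of y] hu hy by simp
    have S: "hu \<ge> hk + inner p d - \<epsilon>" using sub[of xu] hu hk by (simp add: d_def)
    have yz: "y - z1 = (xu - z1) - s *\<^sub>R d" by (simp add: y_def d_def algebra_simps)
    have nyz: "(norm (y - z1))\<^sup>2 = (norm (xu - z1))\<^sup>2 - 2 * s * inner (xu - z1) d + s\<^sup>2 * D\<^sup>2"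
      unfolding yz D_def power2_norm_eq_inner by (simp add: inner_diff_left inner_diff_right inner_commute algebra_simps power2_eq_square)
    have "s * (hu - hk) \<le> 1 / (2 * \<alpha>) * ((norm (y - z1))\<^sup>2 - (norm (xu - z1))\<^sup>2) + \<epsilon>"
      using P hyle by (simp add: algebra_simps)
    also have "\<dots> = 1 / (2 * \<alpha>) * (- 2 * s * inner (xu - z1) d + s\<^sup>2 * D\<^sup>2) + \<epsilon>"
      by (simp add: nyz)
    finally have T1: "s * (hu - hk) \<le> 1 / (2 * \<alpha>) * (- 2 * s * inner (xu - z1) d + s\<^sup>2 * D\<^sup>2) + \<epsilon>" .
    have T2: "s * (inner p d - \<epsilon>) \<le> s * (hu - hk)" using S s by (intro mult_left_mono) auto
    define X where "X = - 2 * s * inner (xu - z1) d + s\<^sup>2 * D\<^sup>2"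
    have T3: "2 * \<alpha> * (s * (inner p d - \<epsilon>)) \<le> 2 * \<alpha> * (1 / (2 * \<alpha>) * X + \<epsilon>)"
      using T1 T2 alpha_pos unfolding X_def by (intro mult_left_mono) auto
    have e1: "2 * \<alpha> * (1 / (2 * \<alpha>) * X + \<epsilon>) = X + 2 * \<alpha> * \<epsilon>" using alpha_pos
      by (simp add: distrib_left)
    have e2: "2 * \<alpha> * (s * (inner p d - \<epsilon>)) = 2 * s * (\<alpha> * inner p d) - s * (2 * \<alpha> * \<epsilon>)"
      by (simp add: algebra_simps)
    have ap: "\<alpha> * inner p d = inner (q + g - xk) d" using alpha_pos by (simp add: p_def)
    have e3: "s * (s * D\<^sup>2 + r\<^sup>2 * (1 + 1 / s)) = s * s * D\<^sup>2 + s * r\<^sup>2 + r\<^sup>2"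
      using s by (simp add: distrib_left)
    have T4: "s * (2 * inner (q + g - xk) d + 2 * inner (xu - z1) d) \<le> s * (s * D\<^sup>2 + r\<^sup>2 * (1 + 1 / s))"
      unfolding e3 using T3 e1 e2 ap r2 unfolding X_def by (simp add: power2_eq_square algebra_simps)
    have T5: "2 * inner (q + g - xk) d + 2 * inner (xu - z1) d \<le> s * D\<^sup>2 + r\<^sup>2 * (1 + 1 / s)"
      using T4 s by (simp only: mult_le_cancel_left_pos)
    have vid: "(q + g - xk) + (xu - z1) = d + (q - z1 + g)" by (simp add: d_def algebra_simps)
    have "inner (q + g - xk) d + inner (xu - z1) d = D\<^sup>2 + inner (q - z1 + g) d"
      using arg_cong[OF vid, of "\<lambda>w. inner w d"] by (simp add: inner_add_left D_def power2_norm_eq_inner)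
    moreover have "- inner (q - z1 + g) d \<le> (c + r) * D"
    proof -
      have "- inner (q - z1 + g) d \<le> norm (q - z1 + g) * norm d"
        using norm_cauchy_schwarz[of "-(q - z1 + g)" d] by (simp only: inner_minus_left norm_minus_cancel)
      also have "\<dots> \<le> (c + r) * D" unfolding D_def using nqz by (intro mult_right_mono) auto
      finally show ?thesis .
    qed
    ultimately show "2 * D\<^sup>2 - 2 * (c + r) * D \<le> s * D\<^sup>2 + r\<^sup>2 * (1 + 1 / s)"
      using T5 by linarith
  qed
  have fk: "f xk \<le> f xprev + inner (gf xprev) (xk - xprev) + L / 2 * (norm (xk - xprev))\<^sup>2"
    by (rule descent[OF f_grad gf_lip])
  have fs: "f xs \<ge> f xprev + inner (gf xprev) (xs - xprev)"
    by (rule grad_ineq[OF f_convex f_grad])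
  have xkx: "xk - xprev = - \<alpha> *\<^sub>R \<xi>" using alpha_pos by (simp add: xi_def)
  have Lb: "L / 2 * (norm (xk - xprev))\<^sup>2 \<le> \<alpha> / 2 * (norm \<xi>)\<^sup>2"
  proof -
    have "L / 2 * (norm (xk - xprev))\<^sup>2 = (\<alpha> * L) * (\<alpha> / 2 * (norm \<xi>)\<^sup>2)"
      unfolding xkx using alpha_pos by (simp add: power_mult_distrib power2_eq_square)
    also have "\<dots> \<le> 1 * (\<alpha> / 2 * (norm \<xi>)\<^sup>2)" using alpha_L alpha_pos by (intro mult_right_mono) auto
    finally show ?thesis by simp
  qed
  have Sx: "hs \<ge> hk + inner p (xs - xk) - \<epsilon>" using sub[of xs] hs hk by simp
  have pid: "p = \<xi> - v - (e - (1 / \<alpha>) *\<^sub>R g)"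
    using alpha_pos by (simp add: p_def xi_def q_def algebra_simps)
  have E1: "inner p (xs - xk) = - inner \<xi> (xk - xs) + inner v (xk - xs) + inner (xk - xs) (e - (1 / \<alpha>) *\<^sub>R g)"
    unfolding pid by (simp add: inner_diff_left inner_diff_right inner_commute algebra_simps)
  have E2: "inner (gf xprev) (xk - xprev) - inner (gf xprev) (xs - xprev) - inner v (xk - xs)
      = inner (v - gf xprev) (xu - xk) - inner (xu - xs) (v - gf xprev)"
    by (simp add: inner_diff_left inner_diff_right inner_commute algebra_simps)
  have E3: "inner (v - gf xprev) (xu - xk) \<le> \<alpha> * N\<^sup>2 + (\<alpha> * norm e + 3 * r) * M"
  proof -
    have "inner (v - gf xprev) (xu - xk) \<le> N * D"
      unfolding N_def D_def d_def by (rule norm_cauchy_schwarz)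
    also have "\<dots> \<le> N * (c + 3 * r)" using Dbnd by (intro mult_left_mono) (auto simp: N_def)
    also have "\<dots> = \<alpha> * N\<^sup>2 + N * (\<alpha> * norm e + 3 * r)" by (simp add: c_def algebra_simps power2_eq_square)
    also have "\<dots> \<le> \<alpha> * N\<^sup>2 + M * (\<alpha> * norm e + 3 * r)"
      using v_bound alpha_pos r0 by (intro add_left_mono mult_right_mono) (auto simp: N_def)
    finally show ?thesis by (simp add: mult.commute)
  qed
  have key: "f xk + hk - (f xs + hs) \<le> inner \<xi> (xk - xs) - inner (xk - xs) (e - (1 / \<alpha>) *\<^sub>R g)
      - inner (xu - xs) (v - gf xprev) + \<alpha> / 2 * (norm \<xi>)\<^sup>2 + \<epsilon> + \<alpha> * N\<^sup>2 + (\<alpha> * norm e + 3 * r) * M"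
    using fk fs Lb Sx E1 E2 E3 by linarith
  have real_goal: "- \<alpha>\<^sup>2 * (norm \<xi>)\<^sup>2 - 2 * \<alpha> * inner \<xi> (xk - xs)
    \<le> (- 2 * \<alpha>) * ((f xk + hk) - (f xs + hs))
       + (2 * \<alpha> * \<epsilon> + 2 * \<alpha>\<^sup>2 * N\<^sup>2
          + (2 * \<alpha>\<^sup>2 * norm e + 6 * \<alpha> * r) * M
          - 2 * \<alpha> * inner (xk - xs) (e - (1 / \<alpha>) *\<^sub>R g)
          - 2 * \<alpha> * inner (xu - xs) (v - gf xprev))"
    by (rule final_alg[OF key alpha_pos])
  have Fk: "F xk = ereal (f xk + hk)" and Fs: "F xs = ereal (f xs + hs)"
    using F_def hk hs by auto
  have conv: "\<And>a b c w :: real. ereal a * (ereal b - ereal c) + ereal w = ereal (a * (b - c) + w)"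
    by simp
  show ?thesis unfolding Fk Fs conv ereal_less_eq(3) using real_goal unfolding N_def r_def .
qed

end
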